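(* Let $f:\mathbb{R}^n\to\overline{\mathbb{R}}$ be proper lower semicontinuous, $(\bar x,\bar v)\in\operatorname{gph}\partial f$, and $0<\varepsilon_2<\varepsilon_1$. Then: (i) for all $(x,v)\in\operatorname{gph}T_{\varepsilon_2}(\bar x,\bar v)$, $\operatorname{gph}T_{\varepsilon_1-\varepsilon_2}(x,v)\subset\operatorname{gph}T_{\varepsilon_1}(\bar x,\bar v)$; (ii) let $s\in\mathbb{R}$ and suppose $f$ is variationally $s$-convex at $\bar x$ for $\bar v$ with corresponding radius $\varepsilon_1$, i.e. $f(x')\ge f(x)+\langle v,x'-x\rangle+\frac s2\|x'-x\|^2$ for all $(x,v)\in\operatorname{gph}T_{\varepsilon_1}(\bar x,\bar v)$ and $x'\in B(\bar x,\varepsilon_1)$. Then for every $(x,v)\in\operatorname{gph}T_{\varepsilon_2}(\bar x,\bar v)$, $f$ is variationally $s$-convex at $x$ for $v$ with radius $\varepsilon_1-\varepsilon_2$, i.e. $f(x')\ge f(\tilde x)+\langle\tilde v,x'-\tilde x\rangle+\frac s2\|x'-\tilde x\|^2$ for all $(\tilde x,\tilde v)\in\operatorname{gph}T_{\varepsilon_1-\varepsilon_2}(x,v)$ and $x'\in B(x,\varepsilon_1-\varepsilon_2)$.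
   Context: $\partial f$: limiting subdifferential. $B(x,r)$: open ball. For $(x,v)\in\operatorname{gph}\partial f$ and $\varepsilon>0$: $\operatorname{gph}T_\varepsilon(x,v)=\{(\tilde x,\tilde v)\in\operatorname{gph}\partial f:\tilde x\in B(x,\varepsilon),\tilde v\in B(v,\varepsilon),f(\tilde x)<f(x)+\varepsilon\}$ ($f$-attentive $\varepsilon$-localization of $\partial f$ around $(x,v)$). Variational $s$-convexity at $\bar x$ for $\bar v$ is characterized by: $f(\bar x)$ finite, $f$ l.s.c. at $\bar x$, and existence of $\varepsilon>0$ and a neighborhood of $\bar x$ on which the inequality $f(x')\ge f(x)+\langle v,x'-x\rangle+\frac s2\|x'-x\|^2$ holds for all $(x,v)\in\operatorname{gph}T_\varepsilon(\bar x,\bar v)$. *)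

theory Defs
  imports "HOL-Analysis.Analysis"
begin

definition proper_fun :: "('a::euclidean_space \<Rightarrow> ereal) \<Rightarrow> bool" where
  "proper_fun f \<longleftrightarrow> (\<forall>x. f x \<noteq> -\<infinity>) \<and> (\<exists>x. f x < \<infinity>)"

definition lsc_fun :: "('a::euclidean_space \<Rightarrow> ereal) \<Rightarrow> bool" where
  "lsc_fun f \<longleftrightarrow> (\<forall>x. \<forall>c. c < f x \<longrightarrow> eventually (\<lambda>y. c < f y) (at x))"

definition regular_subdiff :: "('a::euclidean_space \<Rightarrow> ereal) \<Rightarrow> 'a \<Rightarrow> 'a set" where
  "regular_subdiff f x = {v. \<bar>f x\<bar> \<noteq> \<infinity> \<and>
     (\<forall>e>0. \<exists>d>0. \<forall>y\<in>ball x d.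
        f y \<ge> f x + ereal (inner v (y - x) - e * norm (y - x)))}"

definition limiting_subdiff :: "('a::euclidean_space \<Rightarrow> ereal) \<Rightarrow> 'a \<Rightarrow> 'a set" where
  "limiting_subdiff f x = {v. \<bar>f x\<bar> \<noteq> \<infinity> \<and>
     (\<exists>xs vs. xs \<longlonglongrightarrow> x \<and> (\<lambda>k. f (xs k)) \<longlonglongrightarrow> f x \<and>
        (\<forall>k. vs k \<in> regular_subdiff f (xs k)) \<and> vs \<longlonglongrightarrow> v)}"

definition gph_T :: "('a::euclidean_space \<Rightarrow> ereal) \<Rightarrow> real \<Rightarrow> 'a \<Rightarrow> 'a \<Rightarrow> ('a \<times> 'a) set" where
  "gph_T f e x v = {(x', v'). v' \<in> limiting_subdiff f x' \<and> x' \<in> ball x e \<and>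
      v' \<in> ball v e \<and> f x' < f x + ereal e}"

end

theory Submission
  imports Defs
begin

lemma part1:
  fixes f :: "'a::euclidean_space \<Rightarrow> ereal"
  assumes "vb \<in> limiting_subdiff f xb" and "0 < e2" and "e2 < e1"
    and "(x, v) \<in> gph_T f e2 xb vb" and "(xt, vt) \<in> gph_T f (e1 - e2) x v"
  shows "(xt, vt) \<in> gph_T f e1 xb vb"
proof -
  from assms(1) have fin: "\<bar>f xb\<bar> \<noteq> \<infinity>" by (simp add: limiting_subdiff_def)
  from assms(4) have a: "v \<in> limiting_subdiff f x" "dist xb x < e2" "dist vb v < e2"
    "f x < f xb + ereal e2" by (auto simp: gph_T_def)
  from assms(5) have b: "vt \<in> limiting_subdiff f xt" "dist x xt < e1 - e2" "dist v vt < e1 - e2"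
    "f xt < f x + ereal (e1 - e2)" by (auto simp: gph_T_def)
  have "dist xb xt < e1" using a b dist_triangle[of xb xt x] by (simp add: dist_commute)
  moreover have "dist vb vt < e1" using a b dist_triangle[of vb vt v] by (simp add: dist_commute)
  moreover have "f xt < f xb + ereal e1"
  proof -
    obtain r where r: "f xb = ereal r" using fin by (cases "f xb") auto
    show ?thesis
    proof (cases "f x")
      case (real y)
      then show ?thesis using a(4) b(4) r by (cases "f xt") auto
    next
      case PInf then show ?thesis using a(4) r by auto
    next
      case MInf then show ?thesis using b(4) r by auto
    qed
  qed
  ultimately show ?thesis using b(1) by (auto simp: gph_T_def)
qed

theorem proposition3p3:
  fixes f :: "'a::euclidean_space \<Rightarrow> ereal"
    and xb vb :: 'a and e1 e2 :: real
  assumes "proper_fun f" and "lsc_fun f"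
    and "vb \<in> limiting_subdiff f xb"
    and "0 < e2" and "e2 < e1"
  shows "(\<forall>(x, v) \<in> gph_T f e2 xb vb. gph_T f (e1 - e2) x v \<subseteq> gph_T f e1 xb vb)
    \<and> (\<forall>s::real.
         (\<forall>(x, v) \<in> gph_T f e1 xb vb. \<forall>x' \<in> ball xb e1.
            f x' \<ge> f x + ereal (inner v (x' - x) + s / 2 * (norm (x' - x))\<^sup>2))
         \<longrightarrow> (\<forall>(x, v) \<in> gph_T f e2 xb vb. \<forall>(xt, vt) \<in> gph_T f (e1 - e2) x v.
              \<forall>x' \<in> ball x (e1 - e2).
                f x' \<ge> f xt + ereal (inner vt (x' - xt) + s / 2 * (norm (x' - xt))\<^sup>2)))"
proof (intro conjI allI impI)
  show "\<forall>(x, v) \<in> gph_T f e2 xb vb. gph_T f (e1 - e2) x v \<subseteq> gph_T f e1 xb vb"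
    using part1[OF assms(3-5)] by auto
next
  fix s :: real
  assume H: "\<forall>(x, v) \<in> gph_T f e1 xb vb. \<forall>x' \<in> ball xb e1.
            f x' \<ge> f x + ereal (inner v (x' - x) + s / 2 * (norm (x' - x))\<^sup>2)"
  show "\<forall>(x, v) \<in> gph_T f e2 xb vb. \<forall>(xt, vt) \<in> gph_T f (e1 - e2) x v.
              \<forall>x' \<in> ball x (e1 - e2).
                f x' \<ge> f xt + ereal (inner vt (x' - xt) + s / 2 * (norm (x' - xt))\<^sup>2)"
  proof (clarify)
    fix x v xt vt x'
    assume 1: "(x, v) \<in> gph_T f e2 xb vb" and 2: "(xt, vt) \<in> gph_T f (e1 - e2) x v"
      and 3: "x' \<in> ball x (e1 - e2)"
    have T: "(xt, vt) \<in> gph_T f e1 xb vb" using part1[OF assms(3-5) 1 2] .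
    have "dist xb x < e2" using 1 by (auto simp: gph_T_def)
    hence "x' \<in> ball xb e1" using 3 dist_triangle[of xb x' x] by auto
    then show "f x' \<ge> f xt + ereal (inner vt (x' - xt) + s / 2 * (norm (x' - xt))\<^sup>2)"
      using H T by auto
  qed
qed

end
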